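(* Let $R$ be an associative ring with unity, $\sigma$ an endomorphism of $R$ and $\delta$ a $\sigma$-derivation of $R$. Let $a,b,c\in R$ and let $e\in\mathcal{S}_\ell(R)$ be such that $b\in r_R(cR)=eR$ and $Re$ is $(\sigma,\delta)$-stable. Then: (i) $c\,\sigma(ab)=c\,\delta(ab)=0$; (ii) $c\,f_k^j(ab)=0$ for all integers $0\le k\le j$.
   Context: A $\sigma$-derivation is an additive map $\delta\colon R\to R$ with $\delta(ab)=\sigma(a)\delta(b)+\delta(a)b$ for all $a,b\in R$. For $X\subseteq R$, $r_R(X)=\{a\in R\mid Xa=0\}$. An idempotent $e$ is left semicentral if $ere=re$ for all $r\in R$; $\mathcal{S}_\ell(R)$ denotes the set of left semicentral idempotents of $R$. A subset $X\subseteq R$ is $(\sigma,\delta)$-stable if $\sigma(X)\subseteq X$ and $\delta(X)\subseteq X$. For integers $0\le i\le j$, $f_i^j\in\mathrm{End}(R,+)$ denotes the sum of all possible words (compositions) in $\sigma,\delta$ built with $i$ letters $\sigma$ and $j-i$ letters $\delta$ (so $f_j^j=\sigma^j$, $f_0^j=\delta^j$); in the Ore extension $R[x;\sigma,\delta]$ one has $x^nr=\sum_{i=0}^n f_i^n(r)x^i$. *)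

theory Defs
  imports Main
begin

definition ring_endo :: "('a::ring_1 \<Rightarrow> 'a) \<Rightarrow> bool" where
  "ring_endo \<sigma> \<longleftrightarrow> (\<forall>x y. \<sigma> (x + y) = \<sigma> x + \<sigma> y) \<and> (\<forall>x y. \<sigma> (x * y) = \<sigma> x * \<sigma> y)"

definition sigma_derivation :: "('a::ring_1 \<Rightarrow> 'a) \<Rightarrow> ('a \<Rightarrow> 'a) \<Rightarrow> bool" where
  "sigma_derivation \<sigma> \<delta> \<longleftrightarrow> (\<forall>x y. \<delta> (x + y) = \<delta> x + \<delta> y) \<and>
      (\<forall>a b. \<delta> (a * b) = \<sigma> a * \<delta> b + \<delta> a * b)"

definition right_annihilator :: "'a::ring_1 set \<Rightarrow> 'a set" ("r\<^sub>R") where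
  "r\<^sub>R X = {a. \<forall>x\<in>X. x * a = 0}"

definition left_semicentral :: "'a::ring_1 set" ("\<S>\<^sub>\<ell>") where
  "\<S>\<^sub>\<ell> = {e. e * e = e \<and> (\<forall>r. e * r * e = r * e)}"

definition stable :: "('a \<Rightarrow> 'a) \<Rightarrow> ('a \<Rightarrow> 'a) \<Rightarrow> 'a set \<Rightarrow> bool" where
  "stable \<sigma> \<delta> X \<longleftrightarrow> \<sigma> ` X \<subseteq> X \<and> \<delta> ` X \<subseteq> X"

text \<open>A word in sigma, delta is a list of booleans (True = sigma, False = delta);
  its evaluation is the composition of the letters, left to right.\<close>
definition word_map :: "('a \<Rightarrow> 'a) \<Rightarrow> ('a \<Rightarrow> 'a) \<Rightarrow> bool list \<Rightarrow> 'a \<Rightarrow> 'a" where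
  "word_map \<sigma> \<delta> w = foldr (\<lambda>b g. (if b then \<sigma> else \<delta>) \<circ> g) w id"

definition f_word :: "('a::ring_1 \<Rightarrow> 'a) \<Rightarrow> ('a \<Rightarrow> 'a) \<Rightarrow> nat \<Rightarrow> nat \<Rightarrow> 'a \<Rightarrow> 'a" where
  "f_word \<sigma> \<delta> i j r = (\<Sum>w\<in>{w. length w = j \<and> length (filter id w) = i}. word_map \<sigma> \<delta> w r)"

end

theory Submission
  imports Defs
begin

theorem lemma2p1:
  fixes \<sigma> \<delta> :: "'a::ring_1 \<Rightarrow> 'a" and a b c e :: 'a
  assumes "ring_endo \<sigma>"
    and "sigma_derivation \<sigma> \<delta>"
    and "e \<in> \<S>\<^sub>\<ell>"
    and "r\<^sub>R {c * r | r. True} = {e * r | r. True}"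
    and "b \<in> r\<^sub>R {c * r | r. True}"
    and "stable \<sigma> \<delta> {r * e | r. True}"
  shows "(c * \<sigma> (a * b) = 0 \<and> c * \<delta> (a * b) = 0) \<and>
         (\<forall>j k. k \<le> j \<longrightarrow> c * f_word \<sigma> \<delta> k j (a * b) = 0)"
proof -
  define J where "J = {e * r | r. True}"
  have ee: "e * e = e" and sc: "\<And>r. e * r * e = r * e" using assms(3) by (auto simp: left_semicentral_def)
  have sm: "\<And>x y. \<sigma> (x * y) = \<sigma> x * \<sigma> y" using assms(1) by (auto simp: ring_endo_def)
  have dm: "\<And>x y. \<delta> (x * y) = \<sigma> x * \<delta> y + \<delta> x * y" using assms(2) by (auto simp: sigma_derivation_def)
  have cJ: "c * z = 0" if "z \<in> J" for z
  proof -
    have "z \<in> r\<^sub>R {c * r | r. True}" using that assms(4) J_def by simp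
    then have "c * 1 * z = 0" unfolding right_annihilator_def by blast
    then show ?thesis by simp
  qed
  have ReJ: "r * e \<in> J" for r
  proof -
    have "r * e = e * (r * e)" using sc[of r] by (simp add: mult.assoc)
    then show ?thesis unfolding J_def by blast
  qed
  have eRe: "e \<in> {r * e | r. True}" by (rule CollectI, rule exI[of _ 1], simp)
  have "\<sigma> e \<in> {r * e | r. True}" using assms(6) eRe unfolding stable_def by blast
  then obtain s1 where s1: "\<sigma> e = s1 * e" by blast
  have "\<delta> e \<in> {r * e | r. True}" using assms(6) eRe unfolding stable_def by blast
  then obtain d1 where d1: "\<delta> e = d1 * e" by blast
  have sJ: "\<sigma> x \<in> J" if xJ: "x \<in> J" for x
  proof -
    obtain r where r: "x = e * r" using xJ J_def by auto
    have "e * (e * r) = x" using r ee by (metis mult.assoc)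
    then have "\<sigma> x = \<sigma> e * \<sigma> (e * r)" using sm by metis
    also have "\<dots> = e * (s1 * e * \<sigma> (e * r))" using s1 sc[of s1] by (metis mult.assoc)
    finally show ?thesis unfolding J_def by auto
  qed
  have dJ: "\<delta> x \<in> J" if xJ: "x \<in> J" for x
  proof -
    obtain r where r: "x = e * r" using xJ J_def by auto
    have "e * (e * r) = x" using r ee by (metis mult.assoc)
    then have "\<delta> x = \<sigma> e * \<delta> (e * r) + \<delta> e * (e * r)" using dm by metis
    also have "\<sigma> e * \<delta> (e * r) = e * (s1 * e * \<delta> (e * r))" using s1 sc[of s1] by (metis mult.assoc)
    also have "\<delta> e * (e * r) = e * (d1 * e * (e * r))" using d1 sc[of d1] by (metis mult.assoc)
    also have "e * (s1 * e * \<delta> (e * r)) + e * (d1 * e * (e * r)) = e * (s1 * e * \<delta> (e * r) + d1 * e * (e * r))" by (simp add: distrib_left)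
    finally show ?thesis unfolding J_def by auto
  qed
  have wJ: "word_map \<sigma> \<delta> w x \<in> J" if "x \<in> J" for w x
    using that by (induction w) (auto simp: word_map_def sJ dJ)
  obtain r where r: "b = e * r" using assms(4,5) by auto
  have "a * b = (a * e) * r" using r by (simp add: mult.assoc)
  also have "\<dots> = e * (a * e * r)" using sc[of a] by (metis mult.assoc)
  finally have abJ: "a * b \<in> J" unfolding J_def by blast
  have "c * f_word \<sigma> \<delta> k j (a * b) = 0" for k j
    unfolding f_word_def sum_distrib_left using cJ[OF wJ[OF abJ]] by simp
  then show ?thesis using cJ sJ dJ abJ by auto
qed

end
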